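(* Let $n\ge1$ be an integer, $p\in(0,1)$, $q:=1-p$, and let $j_*:=\lfloor(n+1)p\rfloor+1$. Then for every integer $j\ge j_*$, $$j-\tfrac32<j-1<y_j\le j-\tfrac12<x_j\le y_{j+1}\le j+\tfrac12;$$ moreover, if $j\le n$, then $y_j<j-\frac12$ and $x_j<y_{j+1}$.
   Context: For $j\in\mathbb{Z}$, $q_j:=\mathbf{P}(B_n\ge j)$ and $p_j:=q_j-q_{j+1}=\mathbf{P}(B_n=j)=\binom nj p^jq^{n-j}$, where $B_n$ is binomial with parameters $n,p$. For each integer $j$ with $j_*\le j\le n$ (equivalently $1\le j\le n$ and $j>(n+1)p$, which gives $p_{j-1}>p_j$), define $$x_j:=j-\tfrac12+\frac{q_j}{p_j}+\frac{\frac{q_j}{p_{j-1}}-\frac{q_j}{p_j}}{\ln\frac{p_{j-1}}{p_j}},\qquad y_j:=j-\tfrac12+\frac{q_j}{p_{j-1}}+\frac{\frac{q_j}{p_{j-1}}-\frac{q_j}{p_j}}{\ln\frac{p_{j-1}}{p_j}},$$ and for integers $j\ge n+1$ define $x_j:=j+\frac12$, $y_j:=j-\frac12$. *)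

theory Defs
  imports Complex_Main
begin

definition bin_pmf :: "nat \<Rightarrow> real \<Rightarrow> int \<Rightarrow> real" where
  "bin_pmf n p j = (if 0 \<le> j \<and> j \<le> int n
      then real (n choose nat j) * p ^ nat j * (1 - p) ^ (n - nat j) else 0)"

definition bin_tail :: "nat \<Rightarrow> real \<Rightarrow> int \<Rightarrow> real" where
  "bin_tail n p j = (\<Sum>i\<in>{j..int n}. bin_pmf n p i)"

definition xseq :: "nat \<Rightarrow> real \<Rightarrow> int \<Rightarrow> real" where
  "xseq n p j = (if j \<le> int n then
      real_of_int j - 1/2 + bin_tail n p j / bin_pmf n p j
      + (bin_tail n p j / bin_pmf n p (j - 1) - bin_tail n p j / bin_pmf n p j)
        / ln (bin_pmf n p (j - 1) / bin_pmf n p j)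
    else real_of_int j + 1/2)"

definition yseq :: "nat \<Rightarrow> real \<Rightarrow> int \<Rightarrow> real" where
  "yseq n p j = (if j \<le> int n then
      real_of_int j - 1/2 + bin_tail n p j / bin_pmf n p (j - 1)
      + (bin_tail n p j / bin_pmf n p (j - 1) - bin_tail n p j / bin_pmf n p j)
        / ln (bin_pmf n p (j - 1) / bin_pmf n p j)
    else real_of_int j - 1/2)"

end

theory Submission imports Defs begin
lemma ln_lt_minus1: fixes r :: real assumes "r > 1" shows "ln r < r - 1"
proof -
  have "(\<lambda>x. x - 1 - ln x) 1 < (\<lambda>x. x - 1 - ln x) r"
  proof (rule DERIV_pos_imp_increasing_open[OF assms])
    fix x :: real assume x: "1 < x" "x < r"
    show "\<exists>y. ((\<lambda>x. x - 1 - ln x) has_real_derivative y) (at x) \<and> 0 < y"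
      by (rule exI[of _ "1 - 1/x"]) (use x in \<open>auto intro!: derivative_eq_intros\<close>)
  next
    show "continuous_on {1..r} (\<lambda>x. x - 1 - ln x)"
      by (intro continuous_intros) auto
  qed
  then show ?thesis by simp
qed

lemma ln_gt_1minus: fixes r :: real assumes "r > 1" shows "1 - 1/r < ln r"
proof -
  have "(\<lambda>x. ln x - 1 + 1/x) 1 < (\<lambda>x. ln x - 1 + 1/x) r"
  proof (rule DERIV_pos_imp_increasing_open[OF assms])
    fix x :: real assume x: "1 < x" "x < r"
    have "1/x - 1/x^2 = (x - 1)/x^2" using x by (simp add: field_simps power2_eq_square)
    moreover have "(x - 1)/x^2 > 0" using x by simp
    ultimately show "\<exists>y. ((\<lambda>x. ln x - 1 + 1/x) has_real_derivative y) (at x) \<and> 0 < y"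
      by (intro exI[of _ "1/x - 1/x^2"] conjI)
         (use x in \<open>auto intro!: derivative_eq_intros simp: power2_eq_square\<close>)
  next
    show "continuous_on {1..r} (\<lambda>x. ln x - 1 + 1/x)"
      by (intro continuous_intros) auto
  qed
  then show ?thesis by simp
qed

lemma ln_gt_2: fixes r :: real assumes "r > 1" shows "2*(r-1)/(r+1) < ln r"
proof -
  have "(\<lambda>x. ln x - 2*(x-1)/(x+1)) 1 < (\<lambda>x. ln x - 2*(x-1)/(x+1)) r"
  proof (rule DERIV_pos_imp_increasing_open[OF assms])
    fix x :: real assume x: "1 < x" "x < r"
    have "1/x - (2*(x+1) - 2*(x-1))/(x+1)^2 = (x-1)^2/(x*(x+1)^2)"
    proof -
      have "x \<noteq> 0" "x + 1 \<noteq> 0" using x by auto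
      then show ?thesis by (simp add: divide_simps power2_eq_square) (simp add: algebra_simps)
    qed
    moreover have "(x-1)^2/(x*(x+1)^2) > 0" using x by simp
    ultimately show "\<exists>y. ((\<lambda>x. ln x - 2*(x-1)/(x+1)) has_real_derivative y) (at x) \<and> 0 < y"
      by (intro exI[of _ "1/x - (2*(x+1) - 2*(x-1))/(x+1)^2"] conjI)
         (use x in \<open>auto intro!: derivative_eq_intros simp: power2_eq_square\<close>)
  next
    show "continuous_on {1..r} (\<lambda>x. ln x - 2*(x-1)/(x+1))"
      by (intro continuous_intros) auto
  qed
  then show ?thesis by simp
qed

lemma psi_decr: fixes r s :: real assumes "1 < r" "r < s"
  shows "(1 - 1/s)/ln s < (1 - 1/r)/ln r"
proof -
  have "(\<lambda>x. (1 - 1/x)/ln x) r > (\<lambda>x. (1 - 1/x)/ln x) s"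
  proof (rule DERIV_neg_imp_decreasing[OF assms(2)])
    fix x :: real assume x: "r \<le> x" "x \<le> s"
    then have x1: "x > 1" using assms by simp
    have l: "ln x > 0" using x1 by simp
    have "ln x < x - 1" using ln_lt_minus1[OF x1] .
    then have neg: "(ln x - x + 1)/(x^2 * (ln x)^2) < 0" using l x1
      by (intro divide_neg_pos) auto
    have eq: "((1/x^2) * ln x - (1 - 1/x) * (1/x)) / (ln x)^2 = (ln x - x + 1)/(x^2 * (ln x)^2)"
      using x1 l by (simp add: field_simps power2_eq_square)
    show "\<exists>y. ((\<lambda>x. (1 - 1/x)/ln x) has_real_derivative y) (at x) \<and> y < 0"
      apply (intro exI[of _ "((1/x^2) * ln x - (1 - 1/x) * (1/x)) / (ln x)^2"] conjI)
       apply (use x1 l in \<open>auto intro!: derivative_eq_intros simp: power2_eq_square\<close>)[1]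
      using eq neg by simp
  qed
  then show ?thesis by simp
qed

lemma core_y_upper: fixes r b :: real assumes "r > 1" "b > 0"
  shows "b/r + (b/r - b)/ln r < 0"
proof -
  have L: "ln r > 0" "ln r < r - 1" using assms ln_lt_minus1 by auto
  have "b * ln r < b * (r - 1)" using L assms by simp
  then have "b * ln r / (r * ln r) < b * (r - 1) / (r * ln r)"
    using L assms by (intro divide_strict_right_mono) auto
  moreover have "b * ln r / (r * ln r) = b / r" using L by simp
  moreover have "(b/r - b)/ln r = - (b * (r - 1) / (r * ln r))" using assms L
    by (simp add: field_simps)
  ultimately show ?thesis by linarith
qed

lemma core_x_lower: fixes r b :: real assumes "r > 1" "b > 0"
  shows "0 < b + (b/r - b)/ln r"
proof -
  have L: "ln r > 0" "1 - 1/r < ln r" using assms ln_gt_1minus by auto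
  have "(r - 1)/r = 1 - 1/r" using assms by (simp add: field_simps)
  then have "(r-1)/r < ln r" using L by simp
  then have "r - 1 < r * ln r" using assms by (simp add: divide_simps mult.commute)
  then have "b * (r - 1) < b * (r * ln r)" using assms by simp
  then have "b * (r - 1) / (r * ln r) < 1 * b" using L assms by (simp add: divide_simps mult_ac)
  moreover have "(b/r - b)/ln r = - (b * (r - 1) / (r * ln r))" using assms L
    by (simp add: field_simps)
  ultimately show ?thesis by linarith
qed

lemma core_y_lower: fixes r b :: real assumes "r > 1" "1 \<le> b" "b * (r - 1) < r"
  shows "-1/2 < b/r + (b/r - b)/ln r"
proof -
  have L: "ln r > 0" "2*(r-1)/(r+1) < ln r" using assms ln_gt_2 by auto
  have rp: "r + 1 > 0" "r > 0" using assms by auto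
  have A: "2*(r-1) < ln r * (r+1)" using L rp by (simp add: divide_simps)
  have pos: "(r + 2*b) > 0" using assms by simp
  have B: "2*(r-1) * (r + 2*b) < ln r * (r+1) * (r + 2*b)"
    using mult_strict_right_mono[OF A pos] .
  have C: "2 * b * (r - 1) * (r + 1) \<le> 2*(r-1) * (r + 2*b)"
  proof -
    have "b * (r + 1) \<le> r + 2*b" using assms by (simp add: algebra_simps)
    then have "(2*(r-1)) * (b * (r + 1)) \<le> (2*(r-1)) * (r + 2*b)"
      using assms by (intro mult_left_mono) auto
    then show ?thesis by (simp add: algebra_simps)
  qed
  have D: "2 * b * (r - 1) < ln r * (r + 2*b)"
  proof -
    have "2 * b * (r - 1) * (r + 1) < ln r * (r + 2*b) * (r+1)" using B C by (simp add: mult_ac)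
    then show ?thesis using rp by (simp add: mult_less_cancel_right)
  qed
  have E: "b/r + (b/r - b)/ln r + 1/2 = (ln r * (r + 2*b) - 2 * b * (r - 1)) / (2 * r * ln r)"
    using L rp by (simp add: field_simps)
  have "(ln r * (r + 2*b) - 2 * b * (r - 1)) / (2 * r * ln r) > 0"
    using D L rp by (intro divide_pos_pos) auto
  then show ?thesis using E by linarith
qed

lemma core_step: fixes r r' b b' :: real assumes "1 < r" "r < r'" "0 < b'" "b' \<le> b"
  shows "(b/r - b)/ln r < (b'/r' - b')/ln r'"
proof -
  have psi: "(1 - 1/r')/ln r' < (1 - 1/r)/ln r" using psi_decr assms by simp
  have pos: "(1 - 1/r')/ln r' > 0" using assms by (intro divide_pos_pos) auto
  have "b' * ((1 - 1/r')/ln r') < b * ((1 - 1/r)/ln r)"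
  proof -
    have "b' * ((1 - 1/r')/ln r') \<le> b * ((1 - 1/r')/ln r')" using assms pos by (intro mult_right_mono) auto
    also have "\<dots> < b * ((1 - 1/r)/ln r)" using assms psi by (intro mult_strict_left_mono) auto
    finally show ?thesis .
  qed
  moreover have "(b/r - b)/ln r = - (b * ((1 - 1/r)/ln r))" "(b'/r' - b')/ln r' = - (b' * ((1 - 1/r')/ln r'))"
    by (simp_all add: right_diff_distrib) (metis minus_diff_eq minus_divide_left)+
  ultimately show ?thesis by linarith
qed

definition tt :: "nat \<Rightarrow> real \<Rightarrow> int \<Rightarrow> real" where
  "tt n p i = (real n - real_of_int i) * p / ((real_of_int i + 1) * (1 - p))"

lemma pmf_pos: "0 < p \<Longrightarrow> p < 1 \<Longrightarrow> 0 \<le> i \<Longrightarrow> i \<le> int n \<Longrightarrow> bin_pmf n p i > 0"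
  unfolding bin_pmf_def by (auto simp: zero_less_binomial_iff)

lemma pmf_nonneg: "0 < p \<Longrightarrow> p < 1 \<Longrightarrow> bin_pmf n p i \<ge> 0"
  unfolding bin_pmf_def by auto

lemma pmf_step:
  assumes p: "0 < p" "p < 1" and i: "0 \<le> i" "i \<le> int n"
  shows "bin_pmf n p (i+1) = tt n p i * bin_pmf n p i"
proof (cases "i = int n")
  case True
  then show ?thesis by (simp add: bin_pmf_def tt_def)
next
  case False
  obtain k where k: "i = int k" using i by (metis nonneg_eq_int)
  have kn: "k < n" using False i k by simp
  have c: "real (n choose (k+1)) * (real k + 1) = real (n choose k) * (real n - real k)"
  proof -
    have "(n choose Suc k) * Suc k = (n choose k) * (n - k)"
      by (metis binomial_absorb_comp binomial_absorption mult.commute)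
    then have "real ((n choose Suc k) * Suc k) = real ((n choose k) * (n - k))" by simp
    then show ?thesis using kn by (simp add: of_nat_diff algebra_simps)
  qed
  have e: "n - k = Suc (n - (k+1))" using kn by simp
  have lhs: "bin_pmf n p (i+1) = real (n choose (k+1)) * p^(k+1) * (1-p)^(n-(k+1))"
    using k kn by (simp add: bin_pmf_def nat_add_distrib)
  have rhs: "bin_pmf n p i = real (n choose k) * p^k * (1-p)^(n-k)"
    using k kn by (simp add: bin_pmf_def)
  have "tt n p i * bin_pmf n p i = ((real n - real k) * p / ((real k + 1) * (1 - p))) * (real (n choose k) * p^k * ((1-p) * (1-p)^(n-(k+1))))"
    using rhs e k by (simp add: tt_def)
  also have "\<dots> = (real (n choose k) * (real n - real k)) / (real k + 1) * p^(k+1) * (1-p)^(n-(k+1))"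
  proof -
    have "real k + 1 \<noteq> 0" "1 - p \<noteq> 0" using p by auto
    then show ?thesis by (simp add: divide_simps)
  qed
  also have "\<dots> = real (n choose (k+1)) * p^(k+1) * (1-p)^(n-(k+1))"
    unfolding c[symmetric] by simp
  finally show ?thesis using lhs by simp
qed

lemma tail_step: "i \<le> int n \<Longrightarrow> bin_tail n p i = bin_pmf n p i + bin_tail n p (i+1)"
proof -
  assume "i \<le> int n"
  then have "{i..int n} = insert i {i+1..int n}" by auto
  then show ?thesis unfolding bin_tail_def by simp
qed

lemma tail_zero: "i > int n \<Longrightarrow> bin_tail n p i = 0"
  unfolding bin_tail_def by simp

lemma tail_nonneg: "0 < p \<Longrightarrow> p < 1 \<Longrightarrow> bin_tail n p i \<ge> 0"
  unfolding bin_tail_def by (intro sum_nonneg pmf_nonneg) auto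

lemma tt_le: assumes "0 < p" "p < 1" "0 \<le> i" "i \<le> k" shows "tt n p k \<le> tt n p i"
proof -
  have d: "(real n - i) * (real_of_int k + 1) - (real n - k) * (real_of_int i + 1) = (real n + 1) * (k - i)"
    by (simp add: algebra_simps)
  have "(real n + 1) * (k - i) \<ge> 0" using assms by simp
  then have A: "(real n - k) * (real_of_int i + 1) \<le> (real n - i) * (real_of_int k + 1)" using d by linarith
  have pq: "p * (1-p) > 0" using assms by simp
  have "((real n - k) * (real_of_int i + 1)) * (p * (1-p)) \<le> ((real n - i) * (real_of_int k + 1)) * (p * (1-p))"
    using mult_right_mono[OF A] pq by simp
  moreover have "real_of_int i + 1 > 0" "real_of_int k + 1 > 0" using assms by linarith+
  ultimately show ?thesis unfolding tt_def using assms
    by (simp add: divide_simps mult_ac)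
qed

lemma tt_lt: assumes "0 < p" "p < 1" "0 \<le> i" "i < k" "i < int n" shows "tt n p k < tt n p i"
proof -
  have d: "(real n - i) * (real_of_int k + 1) - (real n - k) * (real_of_int i + 1) = (real n + 1) * (k - i)"
    by (simp add: algebra_simps)
  have "(real n + 1) * (k - i) > 0" using assms by simp
  then have A: "(real n - k) * (real_of_int i + 1) < (real n - i) * (real_of_int k + 1)" using d by linarith
  have pq: "p * (1-p) > 0" using assms by simp
  have "((real n - k) * (real_of_int i + 1)) * (p * (1-p)) < ((real n - i) * (real_of_int k + 1)) * (p * (1-p))"
    using mult_strict_right_mono[OF A pq] by simp
  moreover have "real_of_int i + 1 > 0" "real_of_int k + 1 > 0" using assms by linarith+
  ultimately show ?thesis unfolding tt_def using assms
    by (simp add: divide_simps mult_ac)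
qed

lemma tail_bound_aux:
  assumes p: "0 < p" "p < 1"
  shows "\<forall>i. 0 \<le> i \<and> i \<le> int n \<and> nat (int n - i) = k \<and> tt n p i < 1
     \<longrightarrow> bin_tail n p i \<le> bin_pmf n p i / (1 - tt n p i)"
proof (induction k)
  case 0
  show ?case
  proof (intro allI impI)
    fix i assume h: "0 \<le> i \<and> i \<le> int n \<and> nat (int n - i) = 0 \<and> tt n p i < 1"
    then have i: "i = int n" by simp
    have "bin_tail n p i = bin_pmf n p i" using tail_step[of i n p] tail_zero[of n "i+1" p] i by simp
    moreover have "tt n p i = 0" using i by (simp add: tt_def)
    ultimately show "bin_tail n p i \<le> bin_pmf n p i / (1 - tt n p i)" by simp
  qed
next
  case (Suc k)
  show ?case
  proof (intro allI impI)
    fix i assume h: "0 \<le> i \<and> i \<le> int n \<and> nat (int n - i) = Suc k \<and> tt n p i < 1"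
    then have i: "0 \<le> i" "i < int n" "nat (int n - (i+1)) = k" by auto
    have t1: "tt n p (i+1) \<le> tt n p i" using tt_le[OF p i(1)] by simp
    have t0: "tt n p i < 1" using h by simp
    have tpos: "tt n p i \<ge> 0" using i p unfolding tt_def by (intro divide_nonneg_pos mult_nonneg_nonneg) auto
    have IH: "bin_tail n p (i+1) \<le> bin_pmf n p (i+1) / (1 - tt n p (i+1))"
      using Suc.IH i t1 t0 by auto
    also have "\<dots> \<le> bin_pmf n p (i+1) / (1 - tt n p i)"
      using t1 t0 pmf_nonneg[OF p] by (intro divide_left_mono) auto
    also have "\<dots> = tt n p i * bin_pmf n p i / (1 - tt n p i)"
      using pmf_step[OF p i(1)] i by simp
    finally have "bin_tail n p i \<le> bin_pmf n p i + tt n p i * bin_pmf n p i / (1 - tt n p i)"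
      using tail_step[of i n p] i by simp
    also have "\<dots> = bin_pmf n p i / (1 - tt n p i)" using t0 by (simp add: field_simps)
    finally show "bin_tail n p i \<le> bin_pmf n p i / (1 - tt n p i)" .
  qed
qed

lemma tail_bound:
  assumes "0 < p" "p < 1" "0 \<le> i" "i \<le> int n" "tt n p i < 1"
  shows "bin_tail n p i \<le> bin_pmf n p i / (1 - tt n p i)"
  using tail_bound_aux[OF assms(1,2), of n "nat (int n - i)"] assms by auto

lemma tt_lt1:
  assumes p: "0 < p" "p < 1" and j: "1 \<le> j" "real_of_int j > (real n + 1) * p"
  shows "tt n p (j - 1) < 1"
proof -
  have "(real n - real_of_int (j-1)) * p < (real_of_int (j - 1) + 1) * (1 - p)"
    using j by (simp add: algebra_simps)
  moreover have "(real_of_int (j - 1) + 1) * (1 - p) > 0" using j p by simp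
  ultimately show ?thesis unfolding tt_def by simp
qed

lemma tt_pos:
  assumes p: "0 < p" "p < 1" and "0 \<le> i" "i < int n"
  shows "tt n p i > 0"
  unfolding tt_def using assms by (intro divide_pos_pos mult_pos_pos) auto

lemma tt_nonneg:
  assumes p: "0 < p" "p < 1" and "0 \<le> i" "i \<le> int n"
  shows "tt n p i \<ge> 0"
  unfolding tt_def using assms by (intro divide_nonneg_pos mult_nonneg_nonneg) auto

lemma local_facts:
  assumes p: "0 < p" "p < 1" and j: "1 \<le> j" "j \<le> int n" "real_of_int j > (real n + 1) * p"
  defines "r \<equiv> bin_pmf n p (j-1) / bin_pmf n p j"
  defines "b \<equiv> bin_tail n p j / bin_pmf n p j"
  shows "r > 1" "1 \<le> b" "b * (r - 1) < r"
    "yseq n p j = real_of_int j - 1/2 + (b/r + (b/r - b)/ln r)"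
    "xseq n p j = real_of_int j - 1/2 + (b + (b/r - b)/ln r)"
proof -
  have P0: "bin_pmf n p (j-1) > 0" using j by (intro pmf_pos p) auto
  have P1: "bin_pmf n p j > 0" using j by (intro pmf_pos p) auto
  define s where "s = tt n p (j-1)"
  have s1: "s < 1" unfolding s_def using tt_lt1[OF p j(1,3)] .
  have s0: "s > 0" unfolding s_def using j by (intro tt_pos p) auto
  have st: "bin_pmf n p j = s * bin_pmf n p (j-1)" unfolding s_def
    using pmf_step[OF p, of "j-1" n] j by simp
  have rs: "r = 1/s" unfolding r_def st using P0 by simp
  show r1: "r > 1" using rs s0 s1 by simp
  have Q: "bin_tail n p j = bin_pmf n p j + bin_tail n p (j+1)" using tail_step j by simp
  have "bin_tail n p (j+1) \<ge> 0" using tail_nonneg p by simp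
  then show "1 \<le> b" unfolding b_def using Q P1 by (simp add: divide_simps)
  have tj: "tt n p j < s" unfolding s_def using tt_lt[OF p, of "j-1" j n] j by simp
  have tj0: "tt n p j \<ge> 0" using tt_nonneg[OF p, of j n] j by simp
  have "bin_tail n p j \<le> bin_pmf n p j / (1 - tt n p j)"
    using tail_bound[OF p, of j n] j tj s1 by simp
  then have "b \<le> 1 / (1 - tt n p j)" unfolding b_def using P1 tj s1 by (simp add: divide_simps)
  also have "\<dots> < 1 / (1 - s)" using tj s1 tj0 by (intro divide_strict_left_mono) auto
  finally have "b * (1 - s) < 1" using s1 by (simp add: divide_simps)
  then have "b * (1 - s) * r < 1 * r" using r1 by (intro mult_strict_right_mono) auto
  moreover have "b * (1 - s) * r = b * (r - 1)" using rs s0 by (simp add: field_simps)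
  ultimately show "b * (r - 1) < r" by simp
  have a: "bin_tail n p j / bin_pmf n p (j-1) = b / r" unfolding b_def r_def using P0 P1 by simp
  show "yseq n p j = real_of_int j - 1/2 + (b/r + (b/r - b)/ln r)"
    unfolding yseq_def using j a by (simp add: r_def[symmetric] b_def[symmetric])
  show "xseq n p j = real_of_int j - 1/2 + (b + (b/r - b)/ln r)"
    unfolding xseq_def using j a by (simp add: r_def[symmetric] b_def[symmetric])
qed

lemma step_lt:
  assumes p: "0 < p" "p < 1" and j: "1 \<le> j" "j < int n" "real_of_int j > (real n + 1) * p"
  shows "xseq n p j < yseq n p (j+1)"
proof -
  define r where "r = bin_pmf n p (j-1) / bin_pmf n p j"
  define b where "b = bin_tail n p j / bin_pmf n p j"
  define r' where "r' = bin_pmf n p (j+1-1) / bin_pmf n p (j+1)"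
  define b' where "b' = bin_tail n p (j+1) / bin_pmf n p (j+1)"
  have F: "r > 1" "1 \<le> b" "b * (r - 1) < r"
    "xseq n p j = real_of_int j - 1/2 + (b + (b/r - b)/ln r)"
    using local_facts[OF p, of j n] j unfolding r_def b_def by auto
  have j1: "real_of_int (j+1) > (real n + 1) * p" using j by simp
  have G: "r' > 1" "1 \<le> b'"
    "yseq n p (j+1) = real_of_int (j+1) - 1/2 + (b'/r' + (b'/r' - b')/ln r')"
    using local_facts[OF p, of "j+1" n] j j1 unfolding r'_def b'_def by auto
  have P0: "bin_pmf n p (j-1) > 0" using j by (intro pmf_pos p) auto
  have P1: "bin_pmf n p j > 0" using j by (intro pmf_pos p) auto
  have P2: "bin_pmf n p (j+1) > 0" using j by (intro pmf_pos p) auto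
  define s where "s = tt n p (j-1)"
  define t where "t = tt n p j"
  have st: "bin_pmf n p j = s * bin_pmf n p (j-1)" unfolding s_def
    using pmf_step[OF p, of "j-1" n] j by simp
  have tt': "bin_pmf n p (j+1) = t * bin_pmf n p j" unfolding t_def
    using pmf_step[OF p, of j n] j by simp
  have s0: "s > 0" unfolding s_def using j by (intro tt_pos p) auto
  have t0: "t > 0" unfolding t_def using j by (intro tt_pos p) auto
  have ts: "t < s" unfolding s_def t_def using tt_lt[OF p, of "j-1" j n] j by simp
  have s1: "s < 1" unfolding s_def using tt_lt1[OF p j(1,3)] .
  have rs: "r = 1/s" unfolding r_def st using P0 by simp
  have rt: "r' = 1/t" unfolding r'_def tt' using P1 by simp
  have rr: "r < r'" using rs rt ts t0 by (simp add: divide_strict_left_mono)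
  have Q: "bin_tail n p j = bin_pmf n p j + bin_tail n p (j+1)" using tail_step j by simp
  have b'r': "b'/r' = b - 1" unfolding b'_def r'_def b_def using Q P1 P2 by (simp add: field_simps)
  have bb: "b = 1 + t * b'" unfolding b_def b'_def using Q P1 P2 tt' t0 by (simp add: field_simps)
  have t2: "tt n p (j+1) \<le> t" unfolding t_def using tt_le[OF p, of j "j+1" n] j by simp
  have t2n: "tt n p (j+1) \<ge> 0" using tt_nonneg[OF p, of "j+1" n] j by simp
  have "bin_tail n p (j+1) \<le> bin_pmf n p (j+1) / (1 - tt n p (j+1))"
    using tail_bound[OF p, of "j+1" n] j t2 ts s1 by simp
  then have "b' \<le> 1 / (1 - tt n p (j+1))" unfolding b'_def using P2 t2 ts s1 by (simp add: divide_simps)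
  also have "\<dots> \<le> 1 / (1 - t)" using t2 ts s1 t2n by (intro divide_left_mono) auto
  finally have "b' * (1 - t) \<le> 1" using ts s1 by (simp add: divide_simps)
  then have b'b: "b' \<le> b" using bb by (simp add: algebra_simps)
  have "(b/r - b)/ln r < (b'/r' - b')/ln r'"
    using core_step[OF F(1) rr, of b' b] G(2) b'b by simp
  then show ?thesis using F(4) G(3) b'r' by simp
qed

theorem proposition2p9:
  fixes n :: nat and p :: real and j :: int
  assumes "n \<ge> 1" and "0 < p" and "p < 1"
    and "j \<ge> \<lfloor>(real n + 1) * p\<rfloor> + 1"
  shows "real_of_int j - 3/2 < real_of_int j - 1
      \<and> real_of_int j - 1 < yseq n p j
      \<and> yseq n p j \<le> real_of_int j - 1/2
      \<and> real_of_int j - 1/2 < xseq n p j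
      \<and> xseq n p j \<le> yseq n p (j + 1)
      \<and> yseq n p (j + 1) \<le> real_of_int j + 1/2
      \<and> (j \<le> int n \<longrightarrow> yseq n p j < real_of_int j - 1/2 \<and> xseq n p j < yseq n p (j + 1))"
proof -
  have p: "0 < p" "p < 1" using assms by auto
  have jg: "real_of_int j > (real n + 1) * p"
    using assms(4) by linarith
  have fl: "\<lfloor>(real n + 1) * p\<rfloor> \<ge> 0" using p by simp
  have j1: "1 \<le> j" using assms(4) fl by linarith
  show ?thesis
  proof (cases "j \<le> int n")
    case False
    then show ?thesis by (simp add: xseq_def yseq_def)
  next
    case True
    define r where "r = bin_pmf n p (j-1) / bin_pmf n p j"
    define b where "b = bin_tail n p j / bin_pmf n p j"
    have F: "r > 1" "1 \<le> b" "b * (r - 1) < r"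
      "yseq n p j = real_of_int j - 1/2 + (b/r + (b/r - b)/ln r)"
      "xseq n p j = real_of_int j - 1/2 + (b + (b/r - b)/ln r)"
      using local_facts[OF p j1 True jg] unfolding r_def b_def by auto
    have y1: "yseq n p j < real_of_int j - 1/2" using F(4) core_y_upper[OF F(1), of b] F(2) by simp
    have y2: "real_of_int j - 1 < yseq n p j" using F(4) core_y_lower[OF F(1-3)] by simp
    have x1: "real_of_int j - 1/2 < xseq n p j" using F(5) core_x_lower[OF F(1), of b] F(2) by simp
    have step: "xseq n p j < yseq n p (j+1)"
    proof (cases "j < int n")
      case True
      then show ?thesis using step_lt[OF p j1 True jg] by simp
    next
      case False
      then have jn: "j = int n" using \<open>j \<le> int n\<close> by simp
      have "bin_tail n p j = bin_pmf n p j" using tail_step[of j n p] tail_zero[of n "j+1" p] jn by simp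
      then have "b = 1" unfolding b_def using pmf_pos[OF p, of j n] j1 jn by simp
      moreover have "1/r > 0" using F(1) by simp
      ultimately have "xseq n p j < real_of_int j + 1/2"
        using F(5) core_y_upper[OF F(1), of 1] by (simp del: divide_const_simps; linarith)
      moreover have "yseq n p (j+1) = real_of_int j + 1/2" using jn by (simp add: yseq_def)
      ultimately show ?thesis by simp
    qed
    have yj1: "yseq n p (j+1) \<le> real_of_int j + 1/2"
    proof (cases "j + 1 \<le> int n")
      case True
      define r' where "r' = bin_pmf n p (j+1-1) / bin_pmf n p (j+1)"
      define b' where "b' = bin_tail n p (j+1) / bin_pmf n p (j+1)"
      have G: "r' > 1" "1 \<le> b'"
        "yseq n p (j+1) = real_of_int (j+1) - 1/2 + (b'/r' + (b'/r' - b')/ln r')"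
        using local_facts[OF p, of "j+1" n] j1 True jg unfolding r'_def b'_def by auto
      show ?thesis using G(3) core_y_upper[OF G(1), of b'] G(2) by simp
    next
      case False
      then show ?thesis by (simp add: yseq_def)
    qed
    show ?thesis using y1 y2 x1 step yj1 True by simp
  qed
qed

end
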